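(* Let $\nu\in(0,1)$, $r=\min\{\nu,1-\nu\}$, $R=\max\{\nu,1-\nu\}$, and put $D(t):=L(t,1)-L(t^\nu,1)$. If $t>1$, then \begin{align*} &\frac{r}{\nu}\frac{(\sqrt t-1)^2}{\log t}\le D(t)\le \frac{R}{\nu}\frac{(\sqrt t-1)^2}{\log t},\\ &\frac{1-\nu}{2}\frac{(t-1)^2}{\max\{t,1\}\log t}\le D(t)\le \frac{1-\nu}{2}\frac{(t-1)^2}{\min\{t,1\}\log t},\\ &\frac{1-\nu}{2}\min\{t,1\}\log t\le D(t)\le \frac{1-\nu}{2}\max\{t,1\}\log t,\\ &\frac{1-\nu}{\nu}\min\left\{\frac{\nu}{1-\nu},\frac{1-\nu}{\nu}\right\}\big(L(t,1)-L(t^{1-\nu},1)\big)\le D(t)\le \frac{1-\nu}{\nu}\max\left\{\frac{\nu}{1-\nu},\frac{1-\nu}{\nu}\right\}\big(L(t,1)-L(t^{1-\nu},1)\big). \end{align*} If $0<t<1$, all these inequalities hold with the inequality signs reversed.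
   Context: For $x,y>0$, $x\ne y$, the logarithmic mean is $L(x,y):=\dfrac{x-y}{\log x-\log y}$. *)

theory Defs
  imports Complex_Main
begin

text \<open>Logarithmic mean, meant for x, y > 0 with x \<noteq> y.\<close>
definition logmean :: "real \<Rightarrow> real \<Rightarrow> real" where
  "logmean x y = (x - y) / (ln x - ln y)"

definition Dfun :: "real \<Rightarrow> real \<Rightarrow> real" where
  "Dfun \<nu> t = logmean t 1 - logmean (t powr \<nu>) 1"

end

theory Submission
  imports Defs "HOL-Analysis.Convex"
begin

lemma mono_around:
  fixes f f' :: "real \<Rightarrow> real"
  assumes d: "\<And>y. y \<in> S \<Longrightarrow> (f has_real_derivative f' y) (at y)"
    and p: "\<And>y. y \<in> S \<Longrightarrow> 0 \<le> f' y" and sub: "{min c t..max c t} \<subseteq> S"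
  shows "(c \<le> t \<longrightarrow> f c \<le> f t) \<and> (t \<le> c \<longrightarrow> f t \<le> f c)"
proof -
  have cont: "continuous_on {min c t..max c t} f"
    by (rule continuous_at_imp_continuous_on) (use d sub DERIV_isCont in blast)
  have A: "f c \<le> f t" if "c \<le> t"
  proof (rule DERIV_nonneg_imp_increasing_open[OF that])
    fix x assume "c < x" "x < t"
    then have "x \<in> S" using sub by auto
    then show "\<exists>y. (f has_real_derivative y) (at x) \<and> 0 \<le> y" using d p by blast
  qed (use cont that in \<open>simp add: min_absorb1 max_absorb2\<close>)
  have B: "f t \<le> f c" if "t \<le> c"
  proof (rule DERIV_nonneg_imp_increasing_open[OF that])
    fix x assume "t < x" "x < c"
    then have "x \<in> S" using sub by auto
    then show "\<exists>y. (f has_real_derivative y) (at x) \<and> 0 \<le> y" using d p by blast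
  qed (use cont that in \<open>simp add: min_absorb2 max_absorb1\<close>)
  show ?thesis using A B by blast
qed

lemma min_at:
  fixes f f' :: "real \<Rightarrow> real"
  assumes d: "\<And>y. y \<in> S \<Longrightarrow> (f has_real_derivative f' y) (at y)"
    and p: "\<And>y. y \<in> S \<Longrightarrow> 0 \<le> (y - c) * f' y" and sub: "{min c t..max c t} \<subseteq> S"
  shows "f c \<le> f t"
proof -
  have cont: "continuous_on {min c t..max c t} f"
    by (rule continuous_at_imp_continuous_on) (use d sub DERIV_isCont in blast)
  show ?thesis
  proof (cases "c \<le> t")
    case True
    show ?thesis
    proof (rule DERIV_nonneg_imp_increasing_open[OF True])
      fix x assume x: "c < x" "x < t"
      then have "x \<in> S" using sub by auto
      moreover have "0 \<le> f' x" using p[OF \<open>x \<in> S\<close>] x by (simp add: zero_le_mult_iff)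
      ultimately show "\<exists>y. (f has_real_derivative y) (at x) \<and> 0 \<le> y" using d by blast
    qed (use cont True in \<open>auto simp: min_def max_def\<close>)
  next
    case False
    show ?thesis
    proof (rule DERIV_nonpos_imp_decreasing_open[of t c])
      fix x assume x: "t < x" "x < c"
      then have "x \<in> S" using sub by auto
      moreover have "f' x \<le> 0" using p[OF \<open>x \<in> S\<close>] x by (simp add: zero_le_mult_iff)
      ultimately show "\<exists>y. (f has_real_derivative y) (at x) \<and> y \<le> 0" using d by blast
    qed (use cont False in \<open>auto simp: min_def max_def\<close>)
  qed
qed

lemma chord:
  fixes t a b m :: real
  assumes "0 < t" "a < b" "a \<le> m" "m \<le> b"
  shows "(b - a) * t powr m \<le> (b - m) * t powr a + (m - a) * t powr b"
proof -
  define l where "l = (m - a) / (b - a)"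
  have l: "0 \<le> l" "l \<le> 1" using assms by (auto simp: l_def field_simps)
  have lb: "l * (b - a) = m - a" using assms by (simp add: l_def)
  have m: "m = (1 - l) * a + l * b" using lb by (simp add: algebra_simps)
  have "exp ((1 - l) *\<^sub>R (a * ln t) + l *\<^sub>R (b * ln t)) \<le> (1 - l) * exp (a * ln t) + l * exp (b * ln t)"
    by (rule convex_onD[OF exp_convex]) (use l in auto)
  then have "t powr m \<le> (1 - l) * t powr a + l * t powr b"
    using assms by (simp add: powr_def m algebra_simps)
  then have "(b - a) * t powr m \<le> (b - a) * ((1 - l) * t powr a + l * t powr b)"
    using assms by (intro mult_left_mono) auto
  also have "\<dots> = ((1 - l) * (b - a)) * t powr a + (l * (b - a)) * t powr b"
    by (simp add: algebra_simps)
  also have "\<dots> = (b - m) * t powr a + (m - a) * t powr b"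
  proof -
    have "(1 - l) * (b - a) = b - m" using lb by (simp add: algebra_simps)
    then show ?thesis by (simp only: lb)
  qed
  finally show ?thesis .
qed


definition G :: "real \<Rightarrow> real \<Rightarrow> real" where
  "G v t = v * (t - 1) + 1 - t powr v"

lemma sq_exp: "0 < t \<Longrightarrow> (sqrt t - 1)^2 = t - 2 * sqrt t + 1"
  by (simp add: power2_eq_square algebra_simps)

lemma claim1:
  assumes v: "0 < v" "v < 1" and t: "0 < t"
  shows "min v (1 - v) * (sqrt t - 1)^2 \<le> G v t \<and> G v t \<le> max v (1 - v) * (sqrt t - 1)^2"
proof -
  have h: "t powr (1/2) = sqrt t" using t by (simp add: powr_half_sqrt)
  have z: "t powr 0 = 1" using t by simp
  have o: "t powr 1 = t" using t by simp
  show ?thesis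
  proof (cases "v \<le> 1/2")
    case True
    have c1: "(1/2 - 0) * t powr v \<le> (1/2 - v) * t powr 0 + (v - 0) * t powr (1/2)"
      by (rule chord) (use t v True in auto)
    have c2: "(1 - v) * t powr (1/2) \<le> (1 - 1/2) * t powr v + (1/2 - v) * t powr 1"
      by (rule chord) (use t v True in auto)
    have "v * (sqrt t - 1)^2 \<le> G v t" using c1 unfolding G_def sq_exp[OF t] h z
      by (simp add: algebra_simps)
    moreover have "G v t \<le> (1 - v) * (sqrt t - 1)^2" using c2 unfolding G_def sq_exp[OF t] h o
      by (simp add: algebra_simps)
    ultimately show ?thesis using True by (simp add: min_def max_def)
  next
    case False
    have c1: "(1 - 1/2) * t powr v \<le> (1 - v) * t powr (1/2) + (v - 1/2) * t powr 1"
      by (rule chord) (use t v False in auto)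
    have c2: "(v - 0) * t powr (1/2) \<le> (v - 1/2) * t powr 0 + (1/2 - 0) * t powr v"
      by (rule chord) (use t v False in auto)
    have "(1 - v) * (sqrt t - 1)^2 \<le> G v t" using c1 unfolding G_def sq_exp[OF t] h o
      by (simp add: algebra_simps)
    moreover have "G v t \<le> v * (sqrt t - 1)^2" using c2 unfolding G_def sq_exp[OF t] h z
      by (simp add: algebra_simps)
    ultimately show ?thesis using False by (simp add: min_def max_def)
  qed
qed

lemma claim4_half:
  assumes v: "0 < v" "v \<le> 1/2" and t: "0 < t"
  shows "v * G (1 - v) t \<le> (1 - v) * G v t \<and> v * G v t \<le> (1 - v) * G (1 - v) t"
proof -
  have z: "t powr 0 = 1" using t by simp
  have o: "t powr 1 = t" using t by simp
  have c1: "(1 - v - 0) * t powr v \<le> (1 - v - v) * t powr 0 + (v - 0) * t powr (1 - v)"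
    by (rule chord) (use t v in auto)
  have c2: "(1 - v) * t powr (1 - v) \<le> (1 - (1 - v)) * t powr v + (1 - v - v) * t powr 1"
    by (rule chord) (use t v in auto)
  have "v * G (1 - v) t \<le> (1 - v) * G v t" using c1 unfolding G_def z
    by (simp add: algebra_simps)
  moreover have "v * G v t \<le> (1 - v) * G (1 - v) t" using c2 unfolding G_def o
    by (simp add: algebra_simps)
  ultimately show ?thesis ..
qed


lemma claim2:
  assumes v: "0 < v" "v < 1" and t: "0 < t"
  shows "(1 \<le> t \<longrightarrow> G v t \<le> v * (1 - v) / 2 * (t - 1)^2 \<and> v * (1 - v) / 2 * ((t - 1)^2 / t) \<le> G v t)
       \<and> (t \<le> 1 \<longrightarrow> v * (1 - v) / 2 * (t - 1)^2 \<le> G v t \<and> G v t \<le> v * (1 - v) / 2 * ((t - 1)^2 / t))"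
proof -
  define m where "m y = (1 - v) * (y - 1) - 1 + y powr (v - 1)" for y
  have m0: "0 \<le> m y" if y: "0 < y" for y
  proof -
    have "m 1 \<le> m y"
    proof (rule min_at[where S="{0<..}" and c=1 and t=y and f=m and f'="\<lambda>y. (1 - v) - (1 - v) * y powr (v - 2)"])
      fix y :: real assume y: "y \<in> {0<..}"
      show "(m has_real_derivative (1 - v) - (1 - v) * y powr (v - 2)) (at y)"
        unfolding m_def[abs_def] using y by (auto intro!: derivative_eq_intros simp: algebra_simps)
      show "0 \<le> (y - 1) * ((1 - v) - (1 - v) * y powr (v - 2))"
      proof (cases "1 \<le> y")
        case True
        have "y powr (v - 2) \<le> y powr 0" by (rule powr_mono) (use True v in auto)
        then show ?thesis using True v y by (auto intro!: mult_nonneg_nonneg)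
      next
        case False
        have "y powr 0 \<le> y powr (v - 2)" by (rule powr_mono') (use False v y in auto)
        then have "(1 - v) * 1 \<le> (1 - v) * y powr (v - 2)" using v y by (intro mult_left_mono) auto
        then show ?thesis using False v y by (auto intro!: mult_nonpos_nonpos)
      qed
    qed (use y in auto)
    then show ?thesis by (simp add: m_def)
  qed
  define h where "h y = v * (1 - v) / 2 * (y - 1)^2 - G v y" for y
  have hd: "(h has_real_derivative v * m y) (at y)" if "y \<in> {0<..}" for y
    unfolding h_def[abs_def] G_def m_def using that
    by (auto intro!: derivative_eq_intros simp: field_simps power2_eq_square)
  have H: "(1 \<le> t \<longrightarrow> h 1 \<le> h t) \<and> (t \<le> 1 \<longrightarrow> h t \<le> h 1)"
  proof (rule mono_around[OF hd])
    fix y :: real assume "y \<in> {0<..}"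
    then show "0 \<le> v * m y" using m0 v by simp
  qed (use t in \<open>auto simp: min_def max_def\<close>)
  have h1: "h 1 = 0" by (simp add: h_def G_def)
  define p where "p y = v - v * y powr (v - 1) - v * (1 - v) / 2 * (1 - y powr (-2))" for y
  have p0: "0 \<le> p y" if y: "0 < y" for y
  proof -
    have "p 1 \<le> p y"
    proof (rule min_at[where S="{0<..}" and c=1 and t=y and f=p and f'="\<lambda>y. v * (1 - v) * (y powr (v - 2) - y powr (-3))"])
      fix y :: real assume y: "y \<in> {0<..}"
      show "(p has_real_derivative v * (1 - v) * (y powr (v - 2) - y powr (-3))) (at y)"
        unfolding p_def[abs_def] using y by (auto intro!: derivative_eq_intros simp: field_simps)
      show "0 \<le> (y - 1) * (v * (1 - v) * (y powr (v - 2) - y powr (-3)))"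
      proof (cases "1 \<le> y")
        case True
        have "y powr (-3) \<le> y powr (v - 2)" by (rule powr_mono) (use True v in auto)
        then show ?thesis using True v y by (auto intro!: mult_nonneg_nonneg)
      next
        case False
        have "y powr (v - 2) \<le> y powr (-3)" by (rule powr_mono') (use False v y in auto)
        then show ?thesis using False v y
          by (intro mult_nonpos_nonpos) (auto intro!: mult_nonneg_nonpos)
      qed
    qed (use y in auto)
    then show ?thesis by (simp add: p_def)
  qed
  define k where "k y = G v y - v * (1 - v) / 2 * (y - 2 + 1 / y)" for y
  have kd: "(k has_real_derivative p y) (at y)" if "y \<in> {0<..}" for y
  proof -
    have y: "0 < y" using that by simp
    have e: "y powr (-2) = 1 / y^2" using y by (simp add: powr_minus powr_numeral divide_inverse)
    show ?thesis
    unfolding k_def[abs_def] G_def p_def e using y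
    by (auto intro!: derivative_eq_intros simp: field_simps power2_eq_square)
  qed
  have K: "(1 \<le> t \<longrightarrow> k 1 \<le> k t) \<and> (t \<le> 1 \<longrightarrow> k t \<le> k 1)"
  proof (rule mono_around[OF kd])
    fix y :: real assume "y \<in> {0<..}"
    then show "0 \<le> p y" using p0 by simp
  qed (use t in \<open>auto simp: min_def max_def\<close>)
  have k1: "k 1 = 0" by (simp add: k_def G_def)
  have e: "(t - 1)^2 / t = t - 2 + 1 / t"
    using t by (simp add: power2_eq_square field_simps)
  show ?thesis using H K h1 k1 unfolding h_def k_def e by auto
qed


lemma kk_bounds:
  fixes u :: real
  shows "(0 \<le> u \<longrightarrow> u^2 / 2 \<le> u * exp u - exp u + 1 \<and> u * exp u - exp u + 1 \<le> u^2 * exp u / 2)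
       \<and> (u \<le> 0 \<longrightarrow> u^2 * exp u / 2 \<le> u * exp u - exp u + 1 \<and> u * exp u - exp u + 1 \<le> u^2 / 2)"
proof -
  have A: "(0 \<le> u \<longrightarrow> (\<lambda>u. u * exp u - exp u + 1 - u^2/2) 0 \<le> (\<lambda>u. u * exp u - exp u + 1 - u^2/2) u)
         \<and> (u \<le> 0 \<longrightarrow> (\<lambda>u. u * exp u - exp u + 1 - u^2/2) u \<le> (\<lambda>u. u * exp u - exp u + 1 - u^2/2) 0)"
  proof (rule mono_around[where S=UNIV and f'="\<lambda>u. u * (exp u - 1)"])
    fix y :: real
    show "((\<lambda>u. u * exp u - exp u + 1 - u^2/2) has_real_derivative y * (exp y - 1)) (at y)"
      by (auto intro!: derivative_eq_intros simp: algebra_simps power2_eq_square)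
    show "0 \<le> y * (exp y - 1)"
    proof (cases "0 \<le> y")
      case True then show ?thesis by simp
    next
      case False then have "exp y \<le> 1" by simp
      then show ?thesis using False by (intro mult_nonpos_nonpos) auto
    qed
  qed auto
  have B: "(0 \<le> u \<longrightarrow> (\<lambda>u. u^2 * exp u / 2 - (u * exp u - exp u + 1)) 0 \<le> (\<lambda>u. u^2 * exp u / 2 - (u * exp u - exp u + 1)) u)
         \<and> (u \<le> 0 \<longrightarrow> (\<lambda>u. u^2 * exp u / 2 - (u * exp u - exp u + 1)) u \<le> (\<lambda>u. u^2 * exp u / 2 - (u * exp u - exp u + 1)) 0)"
  proof (rule mono_around[where S=UNIV and f'="\<lambda>u. u^2 * exp u / 2"])
    fix y :: real
    show "((\<lambda>u. u^2 * exp u / 2 - (u * exp u - exp u + 1)) has_real_derivative y^2 * exp y / 2) (at y)"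
      by (auto intro!: derivative_eq_intros simp: field_simps power2_eq_square)
    show "0 \<le> y^2 * exp y / 2" by simp
  qed auto
  show ?thesis using A B by auto
qed

lemma phi_deriv:
  "u \<noteq> 0 \<Longrightarrow> ((\<lambda>u. (exp u - 1)/u) has_real_derivative (u*exp u - exp u + 1)/u^2) (at u)"
  by (auto intro!: derivative_eq_intros simp: field_simps power2_eq_square)

lemma claim3:
  fixes v x :: real
  assumes v: "0 < v" "v < 1"
  shows "(0 < x \<longrightarrow> (1 - v) / 2 * x \<le> (exp x - 1)/x - (exp (v*x) - 1)/(v*x)
                   \<and> (exp x - 1)/x - (exp (v*x) - 1)/(v*x) \<le> (1 - v) / 2 * exp x * x)
       \<and> (x < 0 \<longrightarrow> (1 - v) / 2 * x \<le> (exp x - 1)/x - (exp (v*x) - 1)/(v*x)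
                   \<and> (exp x - 1)/x - (exp (v*x) - 1)/(v*x) \<le> (1 - v) / 2 * exp x * x)"
proof (intro conjI impI)
  define q where "q z = (z*exp z - exp z + 1)/z^2" for z :: real
  let ?f = "\<lambda>u::real. (exp u - 1)/u"
  {
    assume x: "0 < x"
    have "v * x < x" using v x by simp
    then obtain z where z: "v * x < z" "z < x" "?f x - ?f (v*x) = (x - v*x) * q z"
      using MVT2[of "v*x" x ?f q] phi_deriv v x unfolding q_def
      by (metis (no_types, lifting) less_le_trans mult_pos_pos order_less_irrefl)
    have zp: "0 < z" using z v x by (meson less_trans mult_pos_pos)
    have qb: "1/2 \<le> q z \<and> q z \<le> exp z / 2"
      using kk_bounds[of z] zp unfolding q_def by (auto simp: field_simps)
    have ez: "exp z \<le> exp x" using z by simp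
    have d: "(x - v*x) = (1 - v) * x" by (simp add: algebra_simps)
    have p: "0 \<le> (1 - v) * x" using v x by simp
    show "(1 - v) / 2 * x \<le> ?f x - ?f (v*x)"
      using mult_left_mono[OF conjunct1[OF qb] p] unfolding z(3) d by simp
    show "?f x - ?f (v*x) \<le> (1 - v) / 2 * exp x * x"
    proof -
      have "q z \<le> exp x / 2" using qb ez by linarith
      from mult_left_mono[OF this p] show ?thesis unfolding z(3) d by (simp add: mult_ac)
    qed
  }
  {
    assume x: "x < 0"
    have "x < v * x" using v x by (simp add: mult_less_cancel_right_disj)
    then obtain z where z: "x < z" "z < v * x" "?f (v*x) - ?f x = (v*x - x) * q z"
      using MVT2[of x "v*x" ?f q] phi_deriv v x unfolding q_def
      by (metis (no_types, lifting) le_less_trans mult_pos_neg order_less_irrefl)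
    have zn: "z < 0" using z v x by (meson less_trans mult_pos_neg)
    have qb: "exp z / 2 \<le> q z \<and> q z \<le> 1/2"
      using kk_bounds[of z] zn unfolding q_def by (auto simp: field_simps)
    have ez: "exp x \<le> exp z" using z by simp
    have d: "?f x - ?f (v*x) = - (((1 - v) * (-x)) * q z)" using z(3) by (simp add: algebra_simps)
    have p: "0 \<le> (1 - v) * (-x)" using v x by (intro mult_nonneg_nonneg) auto
    show "(1 - v) / 2 * x \<le> ?f x - ?f (v*x)"
      using mult_left_mono[OF conjunct2[OF qb] p] unfolding d by (simp add: field_simps)
    show "?f x - ?f (v*x) \<le> (1 - v) / 2 * exp x * x"
    proof -
      have "exp x / 2 \<le> q z" using qb ez by linarith
      from mult_left_mono[OF this p] show ?thesis unfolding d by (simp add: field_simps)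
    qed
  }
qed

theorem proposition2p6:
  fixes \<nu> t :: real
  assumes "0 < \<nu>" and "\<nu> < 1"
  defines "r \<equiv> min \<nu> (1 - \<nu>)" and "R \<equiv> max \<nu> (1 - \<nu>)"
  shows "(1 < t \<longrightarrow>
      r / \<nu> * (sqrt t - 1)^2 / ln t \<le> Dfun \<nu> t
    \<and> Dfun \<nu> t \<le> R / \<nu> * (sqrt t - 1)^2 / ln t
    \<and> (1 - \<nu>) / 2 * (t - 1)^2 / (max t 1 * ln t) \<le> Dfun \<nu> t
    \<and> Dfun \<nu> t \<le> (1 - \<nu>) / 2 * (t - 1)^2 / (min t 1 * ln t)
    \<and> (1 - \<nu>) / 2 * min t 1 * ln t \<le> Dfun \<nu> t
    \<and> Dfun \<nu> t \<le> (1 - \<nu>) / 2 * max t 1 * ln t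
    \<and> (1 - \<nu>) / \<nu> * min (\<nu> / (1 - \<nu>)) ((1 - \<nu>) / \<nu>)
        * (logmean t 1 - logmean (t powr (1 - \<nu>)) 1) \<le> Dfun \<nu> t
    \<and> Dfun \<nu> t \<le> (1 - \<nu>) / \<nu> * max (\<nu> / (1 - \<nu>)) ((1 - \<nu>) / \<nu>)
        * (logmean t 1 - logmean (t powr (1 - \<nu>)) 1))
   \<and> (0 < t \<and> t < 1 \<longrightarrow>
      r / \<nu> * (sqrt t - 1)^2 / ln t \<ge> Dfun \<nu> t
    \<and> Dfun \<nu> t \<ge> R / \<nu> * (sqrt t - 1)^2 / ln t
    \<and> (1 - \<nu>) / 2 * (t - 1)^2 / (max t 1 * ln t) \<ge> Dfun \<nu> t
    \<and> Dfun \<nu> t \<ge> (1 - \<nu>) / 2 * (t - 1)^2 / (min t 1 * ln t)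
    \<and> (1 - \<nu>) / 2 * min t 1 * ln t \<ge> Dfun \<nu> t
    \<and> Dfun \<nu> t \<ge> (1 - \<nu>) / 2 * max t 1 * ln t
    \<and> (1 - \<nu>) / \<nu> * min (\<nu> / (1 - \<nu>)) ((1 - \<nu>) / \<nu>)
        * (logmean t 1 - logmean (t powr (1 - \<nu>)) 1) \<ge> Dfun \<nu> t
    \<and> Dfun \<nu> t \<ge> (1 - \<nu>) / \<nu> * max (\<nu> / (1 - \<nu>)) ((1 - \<nu>) / \<nu>)
        * (logmean t 1 - logmean (t powr (1 - \<nu>)) 1))"
proof -
  note v = assms(1,2)
  have rr: "r = min \<nu> (1 - \<nu>)" "R = max \<nu> (1 - \<nu>)" using assms(3,4) by simp_all
  let ?E = "logmean t 1 - logmean (t powr (1 - \<nu>)) 1"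
  have common: "Dfun \<nu> t = G \<nu> t / (\<nu> * ln t) \<and> ?E = G (1 - \<nu>) t / ((1 - \<nu>) * ln t)
      \<and> Dfun \<nu> t = (exp (ln t) - 1) / ln t - (exp (\<nu> * ln t) - 1) / (\<nu> * ln t)"
    if t: "0 < t" "t \<noteq> 1"
  proof -
    have x: "ln t \<noteq> 0" using t by simp
    have e1: "exp (ln t) = t" "exp (\<nu> * ln t) = t powr \<nu>" using t by (simp_all add: powr_def)
    show ?thesis using x v t
      unfolding Dfun_def logmean_def G_def e1
      by (simp add: ln_powr field_simps)
  qed
  have c4: "min (\<nu> / (1 - \<nu>)) ((1 - \<nu>) / \<nu>) * G (1 - \<nu>) t \<le> G \<nu> t
      \<and> G \<nu> t \<le> max (\<nu> / (1 - \<nu>)) ((1 - \<nu>) / \<nu>) * G (1 - \<nu>) t" if t: "0 < t"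
  proof (cases "\<nu> \<le> 1/2")
    case True
    have h: "\<nu> * G (1 - \<nu>) t \<le> (1 - \<nu>) * G \<nu> t \<and> \<nu> * G \<nu> t \<le> (1 - \<nu>) * G (1 - \<nu>) t"
      by (rule claim4_half) (use v True t in auto)
    have mm: "min (\<nu> / (1 - \<nu>)) ((1 - \<nu>) / \<nu>) = \<nu> / (1 - \<nu>)"
             "max (\<nu> / (1 - \<nu>)) ((1 - \<nu>) / \<nu>) = (1 - \<nu>) / \<nu>"
      using v True by (auto simp: min_def max_def field_simps)
    show ?thesis unfolding mm using h v by (auto simp: field_simps)
  next
    case False
    have h: "(1 - \<nu>) * G (1 - (1 - \<nu>)) t \<le> (1 - (1 - \<nu>)) * G (1 - \<nu>) t \<and> (1 - \<nu>) * G (1 - \<nu>) t \<le> (1 - (1 - \<nu>)) * G (1 - (1 - \<nu>)) t"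
      by (rule claim4_half) (use v False t in auto)
    have mm: "min (\<nu> / (1 - \<nu>)) ((1 - \<nu>) / \<nu>) = (1 - \<nu>) / \<nu>"
             "max (\<nu> / (1 - \<nu>)) ((1 - \<nu>) / \<nu>) = \<nu> / (1 - \<nu>)"
      using v False by (auto simp: min_def max_def field_simps)
    show ?thesis unfolding mm using h v by (auto simp: field_simps)
  qed
  show ?thesis
  proof (intro conjI impI)
    assume t1: "1 < t"
    have t: "0 < t" "t \<noteq> 1" using t1 by auto
    have x: "0 < ln t" using t1 by simp
    note cm = common[OF t]
    note c1 = claim1[OF v t(1)]
    note c2 = claim2[OF v t(1)]
    note c3 = claim3[OF v, of "ln t"]
    note c4' = c4[OF t(1)]
    have d3: "Dfun \<nu> t = (exp (ln t) - 1)/ln t - (exp (\<nu>*ln t) - 1)/(\<nu>*ln t)" using cm by blast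
    have mx: "max t 1 = t" "min t 1 = 1" using t1 by auto
    have et: "exp (ln t) = t" using t by simp
    show "r / \<nu> * (sqrt t - 1)^2 / ln t \<le> Dfun \<nu> t" using c1 cm x v unfolding rr by (simp add: field_simps)
    show "Dfun \<nu> t \<le> R / \<nu> * (sqrt t - 1)^2 / ln t" using c1 cm x v unfolding rr by (simp add: field_simps)
    show "(1 - \<nu>) / 2 * (t - 1)^2 / (max t 1 * ln t) \<le> Dfun \<nu> t"
    proof -
      have g: "G \<nu> t = \<nu> * (ln t * Dfun \<nu> t)" using cm v x by (simp add: field_simps)
      have h: "\<nu> * (1 - \<nu>) / 2 * ((t - 1)^2 / t) \<le> G \<nu> t" using c2 t1 by simp
      have "\<nu> * ((1 - \<nu>) * (t - 1)^2) \<le> \<nu> * (2 * t * ln t * Dfun \<nu> t)"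
        using h t unfolding g by (simp add: field_simps)
      then have "(1 - \<nu>) * (t - 1)^2 \<le> 2 * t * ln t * Dfun \<nu> t"
        using v by (simp add: mult_le_cancel_left_pos)
      then show ?thesis using t x unfolding mx by (simp add: field_simps)
    qed
    show "Dfun \<nu> t \<le> (1 - \<nu>) / 2 * (t - 1)^2 / (min t 1 * ln t)"
    proof -
      have g: "G \<nu> t = \<nu> * (ln t * Dfun \<nu> t)" using cm v x by (simp add: field_simps)
      have "\<nu> * (ln t * Dfun \<nu> t) \<le> \<nu> * ((1 - \<nu>) / 2 * (t - 1)^2)"
        using c2 t1 unfolding g by (simp add: algebra_simps)
      then have "ln t * Dfun \<nu> t \<le> (1 - \<nu>) / 2 * (t - 1)^2"
        using v by (simp add: mult_le_cancel_left_pos)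
      then show ?thesis using t x unfolding mx by (simp add: field_simps)
    qed
    show "(1 - \<nu>) / 2 * min t 1 * ln t \<le> Dfun \<nu> t" using c3 d3 x unfolding mx et by simp
    show "Dfun \<nu> t \<le> (1 - \<nu>) / 2 * max t 1 * ln t" using c3 d3 x unfolding mx et by simp
    have dE: "?E = G (1 - \<nu>) t / ((1 - \<nu>) * ln t)" and dD: "Dfun \<nu> t = G \<nu> t / (\<nu> * ln t)" using cm by blast+
    have vx: "0 < \<nu> * ln t" using v x by (simp add: mult_pos_pos mult_pos_neg)
    have E1: "(1 - \<nu>) / \<nu> * c * ?E = (c * G (1 - \<nu>) t) / (\<nu> * ln t)" for c
      unfolding dE using v x by (simp add: field_simps)
    show "(1 - \<nu>) / \<nu> * min (\<nu> / (1 - \<nu>)) ((1 - \<nu>) / \<nu>) * ?E \<le> Dfun \<nu> t"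
      unfolding E1 dD by (rule divide_right_mono) (use c4' vx in auto)
    show "Dfun \<nu> t \<le> (1 - \<nu>) / \<nu> * max (\<nu> / (1 - \<nu>)) ((1 - \<nu>) / \<nu>) * ?E"
      unfolding E1 dD by (rule divide_right_mono) (use c4' vx in auto)
  next
    assume t1: "0 < t \<and> t < 1"
    have t: "0 < t" "t \<noteq> 1" using t1 by auto
    have x: "ln t < 0" using t1 by simp
    note cm = common[OF t]
    note c1 = claim1[OF v t(1)]
    note c2 = claim2[OF v t(1)]
    note c3 = claim3[OF v, of "ln t"]
    note c4' = c4[OF t(1)]
    have d3: "Dfun \<nu> t = (exp (ln t) - 1)/ln t - (exp (\<nu>*ln t) - 1)/(\<nu>*ln t)" using cm by blast
    have mx: "max t 1 = 1" "min t 1 = t" using t1 by auto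
    have et: "exp (ln t) = t" using t by simp
    have dD1: "Dfun \<nu> t = G \<nu> t / (\<nu> * ln t)" using cm by blast
    have vx1: "\<nu> * ln t \<le> 0" using v x by (simp add: mult_nonneg_nonpos)
    have S1: "c / \<nu> * (sqrt t - 1)^2 / ln t = (c * (sqrt t - 1)^2) / (\<nu> * ln t)" for c by simp
    show "r / \<nu> * (sqrt t - 1)^2 / ln t \<ge> Dfun \<nu> t"
      unfolding S1 dD1 by (rule divide_right_mono_neg) (use c1 vx1 rr in auto)
    show "Dfun \<nu> t \<ge> R / \<nu> * (sqrt t - 1)^2 / ln t"
      unfolding S1 dD1 by (rule divide_right_mono_neg) (use c1 vx1 rr in auto)
    show "(1 - \<nu>) / 2 * (t - 1)^2 / (max t 1 * ln t) \<ge> Dfun \<nu> t"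
    proof -
      have g: "G \<nu> t = \<nu> * (ln t * Dfun \<nu> t)" using cm v x by (simp add: field_simps)
      have "\<nu> * ((1 - \<nu>) / 2 * (t - 1)^2) \<le> \<nu> * (ln t * Dfun \<nu> t)"
        using c2 t1 unfolding g by (simp add: algebra_simps)
      then have "(1 - \<nu>) / 2 * (t - 1)^2 \<le> ln t * Dfun \<nu> t"
        using v by (simp add: mult_le_cancel_left_pos)
      then show ?thesis using t x unfolding mx by (simp add: field_simps)
    qed
    show "Dfun \<nu> t \<ge> (1 - \<nu>) / 2 * (t - 1)^2 / (min t 1 * ln t)"
    proof -
      have g: "G \<nu> t = \<nu> * (ln t * Dfun \<nu> t)" using cm v x by (simp add: field_simps)
      have h: "G \<nu> t \<le> \<nu> * (1 - \<nu>) / 2 * ((t - 1)^2 / t)" using c2 t1 by simp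
      have "\<nu> * (2 * t * ln t * Dfun \<nu> t) \<le> \<nu> * ((1 - \<nu>) * (t - 1)^2)"
        using h t unfolding g by (simp add: field_simps)
      then have a: "Dfun \<nu> t * (2 * t * ln t) \<le> (1 - \<nu>) * (t - 1)^2"
        using v by (simp add: mult_le_cancel_left_pos mult_ac)
      have tn: "2 * t * ln t < 0" using t x by (simp add: mult_pos_neg)
      have "(1 - \<nu>) * (t - 1)^2 / (2 * t * ln t) \<le> Dfun \<nu> t"
        using a tn by (simp add: neg_divide_le_eq)
      then show ?thesis unfolding mx by (simp add: mult_ac)
    qed
    show "(1 - \<nu>) / 2 * min t 1 * ln t \<ge> Dfun \<nu> t" using c3 d3 x unfolding mx et by (simp add: mult_ac)
    show "Dfun \<nu> t \<ge> (1 - \<nu>) / 2 * max t 1 * ln t" using c3 d3 x unfolding mx et by simp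
    have dE: "?E = G (1 - \<nu>) t / ((1 - \<nu>) * ln t)" and dD: "Dfun \<nu> t = G \<nu> t / (\<nu> * ln t)" using cm by blast+
    have vx: "\<nu> * ln t \<le> 0" using v x by (simp add: mult_nonneg_nonpos)
    have E1: "(1 - \<nu>) / \<nu> * c * ?E = (c * G (1 - \<nu>) t) / (\<nu> * ln t)" for c
      unfolding dE using v x by (simp add: field_simps)
    show "(1 - \<nu>) / \<nu> * min (\<nu> / (1 - \<nu>)) ((1 - \<nu>) / \<nu>) * ?E \<ge> Dfun \<nu> t"
      unfolding E1 dD by (rule divide_right_mono_neg) (use c4' vx in auto)
    show "Dfun \<nu> t \<ge> (1 - \<nu>) / \<nu> * max (\<nu> / (1 - \<nu>)) ((1 - \<nu>) / \<nu>) * ?E"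
      unfolding E1 dD by (rule divide_right_mono_neg) (use c4' vx in auto)
  qed
qed

end
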